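(* Let $G$ be a graph with a pendant vertex $p$, let $v$ be the neighbor of $p$, and let $G'$ be the subgraph of $G$ induced by $V(G)\setminus\{p,v\}$. (1) $G$ is $A$-AW if and only if $G'$ is $A$-AW. (2) Let $r$ be the smallest positive integer such that $T_{V(G)}^{A(G)}(r)\ne\emptyset$, and let $t\in T_{V(G)}^{A(G)}(r)$. Then $\overline{G}$ is $N$-AW if and only if both of the following hold: (a) for every labeling $\pi$ of $V(G)$ there exists $s\in\mathbb{Z}_\ell$ such that the labeling $\pi_s$ is winnable in the adjacency Lights Out game on $G$; (b) for every $z\in\mathbb{Z}_\ell$ there exists $q\in T_{V(G)}^{A(G)}(0)$ such that the congruence $(r+t)x\equiv z+q \pmod{\ell}$ has a solution $x$.
   Context: All graphs are finite and simple; $\overline{G}$ is the complement. Fix an integer $\ell\ge2$; labelings are maps $V(G)\to\mathbb{Z}_\ell$. In the neighborhood Lights Out game, toggling a vertex $w$ adds $1$ (mod $\ell$) to the label of each vertex of the closed neighborhood $N[w]$; in the adjacency Lights Out game, toggling $w$ adds $1$ to the label of each vertex of the open neighborhood $N(w)$. A game is won when all labels are $0$; a labeling is winnable if the game starting from it can be won. A graph is $N$-AW (resp. $A$-AW) if every labeling is winnable in the neighborhood (resp. adjacency) game. For a labeling $\pi$ and $s\in\mathbb{Z}_\ell$, $\pi_s$ is the labeling $\pi_s(w)=\pi(w)+s$ for all $w$. For $U\subseteq V(G)$ and $r\in\mathbb{Z}_\ell$, the set of toggling numbers $T_U^{A(G)}(r)\subseteq\mathbb{Z}_\ell$ consists of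 all $t$ such that the adjacency game on $G$ starting from the labeling that is $r$ on $U$ and $0$ elsewhere can be won by a sequence of toggles in which the vertices of $U$ are toggled a total of $t$ times (mod $\ell$). *)

theory Defs
  imports Main "HOL-Number_Theory.Cong"
begin

text \<open>Labelings and toggle counts are
  integer-valued functions, read modulo the modulus l (so they represent maps
  V -> Z_l). Toggle sequences are represented by the number of times each
  vertex is toggled (order is irrelevant).\<close>

definition simple_graph :: "'a set \<Rightarrow> ('a \<Rightarrow> 'a \<Rightarrow> bool) \<Rightarrow> bool" where
  "simple_graph V E \<longleftrightarrow> finite V \<and> (\<forall>u w. E u w \<longrightarrow> u \<in> V \<and> w \<in> V)
     \<and> (\<forall>u w. E u w \<longrightarrow> E w u) \<and> (\<forall>u. \<not> E u u)"

definition complement_graph :: "'a set \<Rightarrow> ('a \<Rightarrow> 'a \<Rightarrow> bool) \<Rightarrow> 'a \<Rightarrow> 'a \<Rightarrow> bool" where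
  "complement_graph V E u w \<longleftrightarrow> u \<in> V \<and> w \<in> V \<and> u \<noteq> w \<and> \<not> E u w"

definition induced_subgraph :: "('a \<Rightarrow> 'a \<Rightarrow> bool) \<Rightarrow> 'a set \<Rightarrow> 'a \<Rightarrow> 'a \<Rightarrow> bool" where
  "induced_subgraph E W u w \<longleftrightarrow> E u w \<and> u \<in> W \<and> w \<in> W"

definition adj_wins :: "int \<Rightarrow> 'a set \<Rightarrow> ('a \<Rightarrow> 'a \<Rightarrow> bool) \<Rightarrow> ('a \<Rightarrow> int) \<Rightarrow> ('a \<Rightarrow> int) \<Rightarrow> bool" where
  "adj_wins l V E \<pi> x \<longleftrightarrow>
     (\<forall>w\<in>V. [\<pi> w + (\<Sum>u\<in>V. if E u w then x u else 0) = 0] (mod l))"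

definition nbh_wins :: "int \<Rightarrow> 'a set \<Rightarrow> ('a \<Rightarrow> 'a \<Rightarrow> bool) \<Rightarrow> ('a \<Rightarrow> int) \<Rightarrow> ('a \<Rightarrow> int) \<Rightarrow> bool" where
  "nbh_wins l V E \<pi> x \<longleftrightarrow>
     (\<forall>w\<in>V. [\<pi> w + x w + (\<Sum>u\<in>V. if E u w then x u else 0) = 0] (mod l))"

definition adj_winnable :: "int \<Rightarrow> 'a set \<Rightarrow> ('a \<Rightarrow> 'a \<Rightarrow> bool) \<Rightarrow> ('a \<Rightarrow> int) \<Rightarrow> bool" where
  "adj_winnable l V E \<pi> \<longleftrightarrow> (\<exists>x. adj_wins l V E \<pi> x)"

definition nbh_winnable :: "int \<Rightarrow> 'a set \<Rightarrow> ('a \<Rightarrow> 'a \<Rightarrow> bool) \<Rightarrow> ('a \<Rightarrow> int) \<Rightarrow> bool" where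
  "nbh_winnable l V E \<pi> \<longleftrightarrow> (\<exists>x. nbh_wins l V E \<pi> x)"

definition A_AW :: "int \<Rightarrow> 'a set \<Rightarrow> ('a \<Rightarrow> 'a \<Rightarrow> bool) \<Rightarrow> bool" where
  "A_AW l V E \<longleftrightarrow> (\<forall>\<pi>. adj_winnable l V E \<pi>)"

definition N_AW :: "int \<Rightarrow> 'a set \<Rightarrow> ('a \<Rightarrow> 'a \<Rightarrow> bool) \<Rightarrow> bool" where
  "N_AW l V E \<longleftrightarrow> (\<forall>\<pi>. nbh_winnable l V E \<pi>)"

definition toggling_numbers_A ::
  "int \<Rightarrow> 'a set \<Rightarrow> ('a \<Rightarrow> 'a \<Rightarrow> bool) \<Rightarrow> 'a set \<Rightarrow> int \<Rightarrow> int set" where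
  "toggling_numbers_A l V E U r =
     {t. 0 \<le> t \<and> t < l \<and>
         (\<exists>x. adj_wins l V E (\<lambda>w. if w \<in> U then r else 0) x \<and> [(\<Sum>u\<in>U. x u) = t] (mod l))}"

end

theory Submission imports Defs begin

lemma sum_split3:
  assumes "finite V" "p \<in> V" "v \<in> V" "p \<noteq> v"
  shows "sum f V = sum f (V - {p,v}) + f p + f v"
proof -
  have "sum f V = f p + sum f (V - {p})" using assms by (simp add: sum.remove)
  also have "sum f (V - {p}) = f v + sum f (V - {p} - {v})" using assms by (simp add: sum.remove)
  also have "V - {p} - {v} = V - {p,v}" by auto
  finally show ?thesis by (simp add: ac_simps)
qed

lemma adj_wins_lin:
  assumes "adj_wins l V E \<pi> x" "adj_wins l V E \<rho> y"
  shows "adj_wins l V E (\<lambda>w. a * \<pi> w + b * \<rho> w) (\<lambda>u. a * x u + b * y u)"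
  unfolding adj_wins_def
proof
  fix w assume w: "w \<in> V"
  have e: "(\<Sum>u\<in>V. if E u w then a * x u + b * y u else 0)
     = a * (\<Sum>u\<in>V. if E u w then x u else 0) + b * (\<Sum>u\<in>V. if E u w then y u else 0)"
  proof -
    have "(\<Sum>u\<in>V. if E u w then a * x u + b * y u else 0)
       = (\<Sum>u\<in>V. a * (if E u w then x u else 0) + b * (if E u w then y u else 0))"
      by (rule sum.cong) auto
    also have "\<dots> = a * (\<Sum>u\<in>V. if E u w then x u else 0) + b * (\<Sum>u\<in>V. if E u w then y u else 0)"
      by (simp add: sum.distrib sum_distrib_left)
    finally show ?thesis .
  qed
  have h1: "[\<pi> w + (\<Sum>u\<in>V. if E u w then x u else 0) = 0] (mod l)" using assms(1) w unfolding adj_wins_def by blast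
  have h2: "[\<rho> w + (\<Sum>u\<in>V. if E u w then y u else 0) = 0] (mod l)" using assms(2) w unfolding adj_wins_def by blast
  have "[a * (\<pi> w + (\<Sum>u\<in>V. if E u w then x u else 0)) + b * (\<rho> w + (\<Sum>u\<in>V. if E u w then y u else 0)) = a * 0 + b * 0] (mod l)"
    by (intro cong_add cong_mult cong_refl h1 h2)
  then show "[a * \<pi> w + b * \<rho> w + (\<Sum>u\<in>V. if E u w then a * x u + b * y u else 0) = 0] (mod l)"
    unfolding e by (simp add: algebra_simps)
qed

lemma adj_wins_cong:
  assumes "adj_wins l V E \<pi> x" "\<forall>w\<in>V. [\<pi> w = \<rho> w] (mod l)"
  shows "adj_wins l V E \<rho> x"
  unfolding adj_wins_def
proof
  fix w assume w: "w \<in> V"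
  have h1: "[\<pi> w + (\<Sum>u\<in>V. if E u w then x u else 0) = 0] (mod l)" using assms(1) w unfolding adj_wins_def by blast
  have "[\<rho> w + (\<Sum>u\<in>V. if E u w then x u else 0) = \<pi> w + (\<Sum>u\<in>V. if E u w then x u else 0)] (mod l)"
    using assms(2) w by (intro cong_add cong_refl) (simp add: cong_sym)
  then show "[\<rho> w + (\<Sum>u\<in>V. if E u w then x u else 0) = 0] (mod l)" using h1 by (rule cong_trans)
qed

definition hm :: "int \<Rightarrow> 'a set \<Rightarrow> ('a \<Rightarrow> 'a \<Rightarrow> bool) \<Rightarrow> int \<Rightarrow> int \<Rightarrow> bool" where
  "hm l V E a s \<longleftrightarrow> (\<exists>y. adj_wins l V E (\<lambda>w. a) y \<and> [sum y V = s] (mod l))"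

lemma T_iff: "t \<in> toggling_numbers_A l V E V a \<longleftrightarrow> 0 \<le> t \<and> t < l \<and> hm l V E a t"
proof -
  have "adj_wins l V E (\<lambda>w. if w \<in> V then a else 0) x = adj_wins l V E (\<lambda>w. a) x" for x
    unfolding adj_wins_def by auto
  then show ?thesis unfolding toggling_numbers_A_def hm_def by auto
qed

lemma hm_lin:
  assumes "hm l V E a s" "hm l V E b s'"
  shows "hm l V E (i * a + j * b) (i * s + j * s')"
proof -
  obtain x where x: "adj_wins l V E (\<lambda>w. a) x" "[sum x V = s] (mod l)" using assms(1) hm_def by blast
  obtain y where y: "adj_wins l V E (\<lambda>w. b) y" "[sum y V = s'] (mod l)" using assms(2) hm_def by blast
  have "adj_wins l V E (\<lambda>w. i * a + j * b) (\<lambda>u. i * x u + j * y u)"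
    using adj_wins_lin[OF x(1) y(1), of i j] by simp
  moreover have "sum (\<lambda>u. i * x u + j * y u) V = i * sum x V + j * sum y V"
    by (simp add: sum.distrib sum_distrib_left)
  moreover have "[i * sum x V + j * sum y V = i * s + j * s'] (mod l)"
    by (intro cong_add cong_mult cong_refl x(2) y(2))
  ultimately show ?thesis unfolding hm_def by metis
qed

lemma hm_cong:
  assumes "hm l V E a s" "[a = a'] (mod l)" "[s = s'] (mod l)"
  shows "hm l V E a' s'"
proof -
  obtain x where x: "adj_wins l V E (\<lambda>w. a) x" "[sum x V = s] (mod l)" using assms(1) hm_def by blast
  have "adj_wins l V E (\<lambda>w. a') x" using adj_wins_cong[OF x(1), of "\<lambda>w. a'"] assms(2) by blast
  moreover have "[sum x V = s'] (mod l)" using x(2) assms(3) by (rule cong_trans)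
  ultimately show ?thesis unfolding hm_def by blast
qed

lemma hm_zero: "hm l V E 0 0"
  unfolding hm_def adj_wins_def by (rule exI[of _ "\<lambda>_. 0"]) simp

lemma compl_wins:
  assumes G: "simple_graph V E"
  shows "nbh_wins l V (complement_graph V E) \<pi> (\<lambda>u. - y u) \<longleftrightarrow> adj_wins l V E (\<lambda>w. \<pi> w - sum y V) y"
proof -
  have irr: "\<And>u. \<not> E u u" using G unfolding simple_graph_def by blast
  have fin: "finite V" using G unfolding simple_graph_def by blast
  have eq: "\<pi> w + - y w + (\<Sum>u\<in>V. if complement_graph V E u w then - y u else 0)
       = \<pi> w - sum y V + (\<Sum>u\<in>V. if E u w then y u else 0)" if w: "w \<in> V" for w
  proof -
    have "sum y V = (\<Sum>u\<in>V. (if u = w then y u else 0) + (if E u w then y u else 0)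
               + (if complement_graph V E u w then y u else 0))"
      by (rule sum.cong) (use w irr in \<open>auto simp: complement_graph_def\<close>)
    also have "\<dots> = y w + (\<Sum>u\<in>V. if E u w then y u else 0) + (\<Sum>u\<in>V. if complement_graph V E u w then y u else 0)"
      using w fin by (simp add: sum.distrib)
    finally have a: "sum y V = y w + (\<Sum>u\<in>V. if E u w then y u else 0) + (\<Sum>u\<in>V. if complement_graph V E u w then y u else 0)" .
    have b: "(\<Sum>u\<in>V. if complement_graph V E u w then - y u else 0) = - (\<Sum>u\<in>V. if complement_graph V E u w then y u else 0)"
      by (simp add: sum_negf[symmetric] if_distrib cong: if_cong)
    show ?thesis using a b by simp
  qed
  show ?thesis unfolding nbh_wins_def adj_wins_def
  proof (intro ball_cong[OF refl])
    fix w assume "w \<in> V"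
    show "[\<pi> w + - y w + (\<Sum>u\<in>V. if complement_graph V E u w then - y u else 0) = 0] (mod l) =
          [\<pi> w - sum y V + (\<Sum>u\<in>V. if E u w then y u else 0) = 0] (mod l)"
      by (subst eq[OF \<open>w \<in> V\<close>]) (rule refl)
  qed
qed

lemma NAW_iff:
  assumes G: "simple_graph V E"
  shows "N_AW l V (complement_graph V E) \<longleftrightarrow> (\<forall>\<pi>. \<exists>y. adj_wins l V E (\<lambda>w. \<pi> w - sum y V) y)"
proof -
  have "nbh_winnable l V (complement_graph V E) \<pi> \<longleftrightarrow> (\<exists>y. adj_wins l V E (\<lambda>w. \<pi> w - sum y V) y)" for \<pi>
  proof
    assume "nbh_winnable l V (complement_graph V E) \<pi>"
    then obtain x where "nbh_wins l V (complement_graph V E) \<pi> x" unfolding nbh_winnable_def by blast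
    then have "nbh_wins l V (complement_graph V E) \<pi> (\<lambda>u. - (\<lambda>u. - x u) u)" by simp
    then have "adj_wins l V E (\<lambda>w. \<pi> w - sum (\<lambda>u. - x u) V) (\<lambda>u. - x u)"
      by (rule compl_wins[OF G, THEN iffD1])
    then show "\<exists>y. adj_wins l V E (\<lambda>w. \<pi> w - sum y V) y" by (rule exI[of _ "\<lambda>u. - x u"])
  next
    assume "\<exists>y. adj_wins l V E (\<lambda>w. \<pi> w - sum y V) y"
    then obtain y where "adj_wins l V E (\<lambda>w. \<pi> w - sum y V) y" by (rule exE)
    then have "nbh_wins l V (complement_graph V E) \<pi> (\<lambda>u. - y u)"
      by (rule compl_wins[OF G, THEN iffD2])
    then show "nbh_winnable l V (complement_graph V E) \<pi>" unfolding nbh_winnable_def by (rule exI[of _ "\<lambda>u. - y u"])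
  qed
  then show ?thesis unfolding N_AW_def by (rule all_cong1)
qed

lemma hm_div:
  assumes l: "l > 0" and r: "r > 0" and hr: "hm l V E r t"
    and mn: "\<forall>r'. 0 < r' \<and> r' < r \<longrightarrow> toggling_numbers_A l V E V r' = {}"
    and ha: "hm l V E a s"
  shows "\<exists>k. [a = k * r] (mod l)"
proof (cases "a mod l = 0")
  case True
  then show ?thesis by (intro exI[of _ 0]) (simp add: cong_def)
next
  case False
  define a' where "a' = a mod l"
  have a'pos: "a' > 0" using False l unfolding a'_def
    by (metis pos_mod_sign order_le_less)
  have ha': "hm l V E a' s" using hm_cong[OF ha, of a' s] unfolding a'_def by (simp add: cong_def)
  obtain u w where uw: "u * a' + w * r = gcd a' r" using bezout_int by blast
  have hg: "hm l V E (gcd a' r) (u * s + w * t)" using hm_lin[OF ha' hr, of u w] uw by simp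
  have gpos: "gcd a' r > 0" using a'pos by simp
  have gle: "gcd a' r \<le> r" using r by (simp add: gcd_le2_int)
  have "\<not> gcd a' r < r"
  proof
    assume lt: "gcd a' r < r"
    have "(u * s + w * t) mod l \<in> toggling_numbers_A l V E V (gcd a' r)"
      unfolding T_iff using l hm_cong[OF hg, of "gcd a' r" "(u * s + w * t) mod l"] by (simp add: cong_def)
    then show False using mn gpos lt by blast
  qed
  then have "gcd a' r = r" using gle by simp
  then have "r dvd a'" by (metis gcd_dvd1)
  then obtain k where "a' = r * k" by blast
  then have "a mod l = k * r" unfolding a'_def by simp
  then have "(k * r) mod l = a mod l" by (metis mod_mod_trivial)
  then show ?thesis by (intro exI[of _ k]) (simp add: cong_def)
qed

lemma hm_decomp:
  assumes l: "l > 0" and r: "r > 0" and hr: "hm l V E r t"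
    and mn: "\<forall>r'. 0 < r' \<and> r' < r \<longrightarrow> toggling_numbers_A l V E V r' = {}"
    and ha: "hm l V E a s"
  shows "\<exists>k q. q \<in> toggling_numbers_A l V E V 0 \<and> [a = k * r] (mod l) \<and> [s = k * t + q] (mod l)"
proof -
  obtain k where k: "[a = k * r] (mod l)" using hm_div[OF assms] by blast
  have h: "hm l V E (1 * a + (- k) * r) (1 * s + (- k) * t)" by (rule hm_lin[OF ha hr])
  have c1: "[1 * a + (- k) * r = 0] (mod l)"
  proof -
    have "[a - k * r = k * r - k * r] (mod l)" by (intro cong_diff k cong_refl)
    then show ?thesis by simp
  qed
  have c2: "[1 * s + (- k) * t = (s - k * t) mod l] (mod l)" by (simp add: cong_def)
  have "hm l V E 0 ((s - k * t) mod l)" by (rule hm_cong[OF h c1 c2])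
  then have "(s - k * t) mod l \<in> toggling_numbers_A l V E V 0" unfolding T_iff using l by simp
  moreover have "[s = k * t + (s - k * t) mod l] (mod l)" by (simp add: cong_def mod_add_right_eq)
  ultimately show ?thesis using k by blast
qed

lemma part1:
  assumes G: "simple_graph V E" and pV: "p \<in> V" and pv: "E p v" and pen: "\<forall>u. E p u \<longrightarrow> u = v"
  shows "A_AW l V E \<longleftrightarrow> A_AW l (V - {p, v}) (induced_subgraph E (V - {p, v}))"
proof -
  define V' where "V' = V - {p, v}"
  have fin: "finite V" and inV: "\<And>u w. E u w \<Longrightarrow> u \<in> V \<and> w \<in> V"
    and sym: "\<And>u w. E u w \<Longrightarrow> E w u" and irr: "\<And>u. \<not> E u u"
    using G unfolding simple_graph_def by blast+
  have vV: "v \<in> V" using inV pv by blast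
  have pnv: "p \<noteq> v" using irr pv by blast
  have np: "\<And>u. E u p \<Longrightarrow> u = v" using pen sym by blast
  have split: "\<And>f. sum f V = sum f V' + f p + f v" unfolding V'_def by (rule sum_split3[OF fin pV vV pnv])
  have nEp: "\<And>w. w \<in> V' \<Longrightarrow> \<not> E p w" using pen unfolding V'_def by blast
  have ind: "(\<Sum>u\<in>V'. if induced_subgraph E V' u w then x u else 0) = (\<Sum>u\<in>V'. if E u w then x u else 0)"
    if "w \<in> V'" for w x
    by (rule sum.cong) (use that in \<open>auto simp: induced_subgraph_def\<close>)
  have atp: "(\<Sum>u\<in>V. if E u p then x u else 0) = x v" for x :: "'a \<Rightarrow> int"
  proof -
    have "(\<Sum>u\<in>V'. if E u p then x u else 0) = 0"
      by (rule sum.neutral) (use np in \<open>auto simp: V'_def\<close>)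
    then show ?thesis using split[of "\<lambda>u. if E u p then x u else 0"] irr sym[OF pv] by simp
  qed
  show ?thesis
  proof
    assume A: "A_AW l V E"
    show "A_AW l (V - {p, v}) (induced_subgraph E (V - {p, v}))"
      unfolding V'_def[symmetric] A_AW_def adj_winnable_def
    proof
      fix \<pi>' :: "'a \<Rightarrow> int"
      obtain x where x: "adj_wins l V E (\<lambda>w. if w \<in> V' then \<pi>' w else 0) x"
        using A unfolding A_AW_def adj_winnable_def by blast
      have "[0 + (\<Sum>u\<in>V. if E u p then x u else 0) = 0] (mod l)"
        using x pV pnv unfolding adj_wins_def V'_def by fastforce
      then have xv: "[x v = 0] (mod l)" using atp[of x] by simp
      have "adj_wins l V' (induced_subgraph E V') \<pi>' x"
        unfolding adj_wins_def
      proof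
        fix w assume w: "w \<in> V'"
        have wV: "w \<in> V" using w V'_def by blast
        have h: "[\<pi>' w + (\<Sum>u\<in>V. if E u w then x u else 0) = 0] (mod l)"
          using x wV w unfolding adj_wins_def by fastforce
        have sp: "(\<Sum>u\<in>V. if E u w then x u else 0) = (\<Sum>u\<in>V'. if E u w then x u else 0) + (if E v w then x v else 0)"
          using split[of "\<lambda>u. if E u w then x u else 0"] nEp[OF w] sym by auto
        moreover have "[(if E v w then x v else 0) = 0] (mod l)" using xv by simp
        ultimately have "[\<pi>' w + (\<Sum>u\<in>V. if E u w then x u else 0) - (if E v w then x v else 0) = 0 - 0] (mod l)"
          using h by (intro cong_diff) auto
        then show "[\<pi>' w + (\<Sum>u\<in>V'. if induced_subgraph E V' u w then x u else 0) = 0] (mod l)"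
          using ind[OF w, of x] sp by simp
      qed
      then show "\<exists>x. adj_wins l V' (induced_subgraph E V') \<pi>' x" by blast
    qed
  next
    assume A: "A_AW l (V - {p, v}) (induced_subgraph E (V - {p, v}))"
    show "A_AW l V E" unfolding A_AW_def adj_winnable_def
    proof
      fix \<pi> :: "'a \<Rightarrow> int"
      obtain x' where x': "adj_wins l V' (induced_subgraph E V') (\<lambda>w. \<pi> w + (if E v w then - \<pi> p else 0)) x'"
        using A unfolding V'_def[symmetric] A_AW_def adj_winnable_def by blast
      define c where "c = - \<pi> v - (\<Sum>u\<in>V'. if E u v then x' u else 0)"
      define x where "x = (\<lambda>u. if u = v then - \<pi> p else if u = p then c else x' u)"
      have xV': "\<And>u. u \<in> V' \<Longrightarrow> x u = x' u" unfolding x_def V'_def by auto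
      have sV': "(\<Sum>u\<in>V'. if E u w then x u else 0) = (\<Sum>u\<in>V'. if E u w then x' u else 0)" for w
        by (rule sum.cong) (auto simp: xV')
      have "adj_wins l V E \<pi> x" unfolding adj_wins_def
      proof
        fix w assume wV: "w \<in> V"
        consider "w = p" | "w = v" | "w \<in> V'" using wV V'_def by blast
        then show "[\<pi> w + (\<Sum>u\<in>V. if E u w then x u else 0) = 0] (mod l)"
        proof cases
          case 1
          then show ?thesis using atp[of x] by (simp add: x_def)
        next
          case 2
          have "(\<Sum>u\<in>V. if E u w then x u else 0) = (\<Sum>u\<in>V'. if E u v then x' u else 0) + c"
            using split[of "\<lambda>u. if E u w then x u else 0"] 2 sV'[of v] irr sym[OF pv] pnv pv
            by (simp add: x_def)
          then show ?thesis using 2 by (simp add: c_def)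
        next
          case 3
          have h: "[\<pi> w + (if E v w then - \<pi> p else 0) + (\<Sum>u\<in>V'. if E u w then x' u else 0) = 0] (mod l)"
            using x' 3 ind[OF 3, of x'] unfolding adj_wins_def by fastforce
          have "(\<Sum>u\<in>V. if E u w then x u else 0) = (\<Sum>u\<in>V'. if E u w then x' u else 0) + (if E v w then - \<pi> p else 0)"
            using split[of "\<lambda>u. if E u w then x u else 0"] sV'[of w] nEp[OF 3] sym
            by (auto simp: x_def)
          then show ?thesis using h by (simp add: ac_simps)
        qed
      qed
      then show "\<exists>x. adj_wins l V E \<pi> x" by blast
    qed
  qed
qed

theorem theorem3p6:
  fixes V :: "'a set" and E :: "'a \<Rightarrow> 'a \<Rightarrow> bool" and l :: int and p v :: 'a
  assumes "l \<ge> 2"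
    and "simple_graph V E"
    and "p \<in> V" and "E p v" and "\<forall>u. E p u \<longrightarrow> u = v"
  shows "(A_AW l V E \<longleftrightarrow>
            A_AW l (V - {p, v}) (induced_subgraph E (V - {p, v})))
       \<and> (\<forall>r t. r > 0 \<and> toggling_numbers_A l V E V r \<noteq> {}
              \<and> (\<forall>r'. 0 < r' \<and> r' < r \<longrightarrow> toggling_numbers_A l V E V r' = {})
              \<and> t \<in> toggling_numbers_A l V E V r
            \<longrightarrow> (N_AW l V (complement_graph V E) \<longleftrightarrow>
                   (\<forall>\<pi>. \<exists>s. adj_winnable l V E (\<lambda>w. \<pi> w + s))
                 \<and> (\<forall>z. \<exists>q \<in> toggling_numbers_A l V E V 0.
                        \<exists>x. [(r + t) * x = z + q] (mod l))))"
proof -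
  have l: "l > 0" using assms(1) by simp
  show ?thesis
  proof (intro conjI allI impI)
    show "A_AW l V E \<longleftrightarrow> A_AW l (V - {p, v}) (induced_subgraph E (V - {p, v}))"
      by (rule part1[OF assms(2-5)])
  next
    fix r t
    assume H: "r > 0 \<and> toggling_numbers_A l V E V r \<noteq> {}
              \<and> (\<forall>r'. 0 < r' \<and> r' < r \<longrightarrow> toggling_numbers_A l V E V r' = {})
              \<and> t \<in> toggling_numbers_A l V E V r"
    then have r: "r > 0" and mn: "\<forall>r'. 0 < r' \<and> r' < r \<longrightarrow> toggling_numbers_A l V E V r' = {}"
      and tT: "t \<in> toggling_numbers_A l V E V r" by auto
    have hr: "hm l V E r t" using tT T_iff by blast
    show "N_AW l V (complement_graph V E) \<longleftrightarrow>
                   (\<forall>\<pi>. \<exists>s. adj_winnable l V E (\<lambda>w. \<pi> w + s))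
                 \<and> (\<forall>z. \<exists>q \<in> toggling_numbers_A l V E V 0.
                        \<exists>x. [(r + t) * x = z + q] (mod l))"
      unfolding NAW_iff[OF assms(2)]
    proof
      assume N: "\<forall>\<pi>. \<exists>y. adj_wins l V E (\<lambda>w. \<pi> w - sum y V) y"
      show "(\<forall>\<pi>. \<exists>s. adj_winnable l V E (\<lambda>w. \<pi> w + s))
                 \<and> (\<forall>z. \<exists>q \<in> toggling_numbers_A l V E V 0.
                        \<exists>x. [(r + t) * x = z + q] (mod l))"
      proof (intro conjI allI)
        fix \<pi> :: "'a \<Rightarrow> int"
        obtain y where "adj_wins l V E (\<lambda>w. \<pi> w - sum y V) y" using N by blast
        then have "adj_winnable l V E (\<lambda>w. \<pi> w + (- sum y V))" unfolding adj_winnable_def by auto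
        then show "\<exists>s. adj_winnable l V E (\<lambda>w. \<pi> w + s)" by blast
      next
        fix z :: int
        have "\<exists>y. adj_wins l V E (\<lambda>w. z - sum y V) y" using spec[OF N, of "\<lambda>_. z"] by simp
        then obtain y where "adj_wins l V E (\<lambda>w. z - sum y V) y" by (rule exE)
        then have "hm l V E (z - sum y V) (sum y V)" unfolding hm_def by auto
        from hm_decomp[OF l r hr mn this] obtain k q where
          q: "q \<in> toggling_numbers_A l V E V 0" "[z - sum y V = k * r] (mod l)" "[sum y V = k * t + q] (mod l)"
          by blast
        have hq: "hm l V E 0 q" using q(1) T_iff by blast
        have "hm l V E ((-1) * 0 + 0 * 0) ((-1) * q + 0 * 0)" by (rule hm_lin[OF hq hm_zero])
        then have "hm l V E 0 ((- q) mod l)" by (rule hm_cong) (simp_all add: cong_def)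
        then have qT: "(- q) mod l \<in> toggling_numbers_A l V E V 0" using l by (simp add: T_iff)
        have d1: "l dvd (z - sum y V - k * r)" using q(2) by (simp add: cong_iff_dvd_diff)
        have d2: "l dvd (sum y V - (k * t + q))" using q(3) by (simp add: cong_iff_dvd_diff)
        have "l dvd (- ((z - sum y V - k * r) + (sum y V - (k * t + q))))"
          using d1 d2 by (intro dvd_minus_iff[THEN iffD2] dvd_add)
        moreover have "- ((z - sum y V - k * r) + (sum y V - (k * t + q))) = (r + t) * k - (z - q)"
          by (simp add: algebra_simps)
        ultimately have "l dvd ((r + t) * k - (z - q))" by (simp only:)
        then have c1: "[(r + t) * k = z - q] (mod l)" by (simp only: cong_iff_dvd_diff)
        have c2: "[z - q = z + (- q) mod l] (mod l)" by (simp add: cong_def mod_add_right_eq)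
        have "[(r + t) * k = z + (- q) mod l] (mod l)" using c1 c2 by (rule cong_trans)
        then show "\<exists>q \<in> toggling_numbers_A l V E V 0. \<exists>x. [(r + t) * x = z + q] (mod l)"
          using qT by blast
      qed
    next
      assume C: "(\<forall>\<pi>. \<exists>s. adj_winnable l V E (\<lambda>w. \<pi> w + s))
                 \<and> (\<forall>z. \<exists>q \<in> toggling_numbers_A l V E V 0.
                        \<exists>x. [(r + t) * x = z + q] (mod l))"
      show "\<forall>\<pi>. \<exists>y. adj_wins l V E (\<lambda>w. \<pi> w - sum y V) y"
      proof
        fix \<pi> :: "'a \<Rightarrow> int"
        obtain s y0 where y0: "adj_wins l V E (\<lambda>w. \<pi> w + s) y0" using C unfolding adj_winnable_def by blast
        obtain q x where q: "q \<in> toggling_numbers_A l V E V 0"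
          and x: "[(r + t) * x = - (s + sum y0 V) + q] (mod l)" using C by blast
        have hq: "hm l V E 0 q" using q T_iff by blast
        obtain yq where yq: "adj_wins l V E (\<lambda>w. 0) yq" "[sum yq V = q] (mod l)" using hq hm_def by blast
        obtain xr where xr: "adj_wins l V E (\<lambda>w. r) xr" "[sum xr V = t] (mod l)" using hr hm_def by blast
        have w1: "adj_wins l V E (\<lambda>w. x * r + (-1) * 0) (\<lambda>u. x * xr u + (-1) * yq u)"
          using adj_wins_lin[OF xr(1) yq(1), of x "-1"] by simp
        define y where "y = (\<lambda>u. 1 * y0 u + 1 * (x * xr u + (-1) * yq u))"
        have w2: "adj_wins l V E (\<lambda>w. 1 * (\<pi> w + s) + 1 * (x * r + (-1) * 0)) y"
          unfolding y_def by (rule adj_wins_lin[OF y0 w1])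
        have sy: "sum y V = sum y0 V + x * sum xr V - sum yq V"
          unfolding y_def by (simp add: sum.distrib sum_distrib_left sum_subtractf)
        have d1: "l dvd ((r + t) * x - (- (s + sum y0 V) + q))" using x by (simp add: cong_iff_dvd_diff)
        have d2: "l dvd (x * (sum xr V - t))" using xr(2) by (simp add: cong_iff_dvd_diff)
        have d3: "l dvd (sum yq V - q)" using yq(2) by (simp add: cong_iff_dvd_diff)
        have "adj_wins l V E (\<lambda>w. \<pi> w - sum y V) y"
        proof (rule adj_wins_cong[OF w2], intro ballI)
          fix w
          have "l dvd (((r + t) * x - (- (s + sum y0 V) + q)) + x * (sum xr V - t) - (sum yq V - q))"
            by (rule dvd_diff[OF dvd_add[OF d1 d2] d3])
          moreover have "((r + t) * x - (- (s + sum y0 V) + q)) + x * (sum xr V - t) - (sum yq V - q)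
              = 1 * (\<pi> w + s) + 1 * (x * r + (-1) * 0) - (\<pi> w - sum y V)"
            unfolding sy by (simp add: algebra_simps)
          ultimately show "[1 * (\<pi> w + s) + 1 * (x * r + (-1) * 0) = \<pi> w - sum y V] (mod l)"
            by (simp only: cong_iff_dvd_diff)
        qed
        then show "\<exists>y. adj_wins l V E (\<lambda>w. \<pi> w - sum y V) y" by blast
      qed
    qed
  qed
qed

end
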